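(* No finite cyclic group has an $n$-power-free decomposition, for any integer $n\geqslant1$.
   Context: The power graph $\mathcal{P}(G)$ of a finite group $G$ has vertex set $G$, two distinct elements being adjacent when one is a power of the other. An $n$-power-free decomposition of $G$ ($n\geqslant1$) is a partition $G=C\uplus B_1\uplus\cdots\uplus B_n$ of $G$ into a cyclic $p$-subgroup $C$ of maximal order (for some prime $p$) and $n$ nonempty subsets $B_1,\ldots,B_n$ such that each $B_i$ is an independent set (pairwise nonadjacent vertices) of $\mathcal{P}(G)$ and $|B_i|>1$ for each $i$. *)

theory Defs
  imports "HOL-Algebra.Elementary_Groups" "HOL-Computational_Algebra.Primes"
begin

definition power_adj :: "('a, 'b) monoid_scheme \<Rightarrow> 'a \<Rightarrow> 'a \<Rightarrow> bool" where
  "power_adj G x y \<longleftrightarrow> x \<in> carrier G \<and> y \<in> carrier G \<and> x \<noteq> y \<and>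
     ((\<exists>k::int. y = x [^]\<^bsub>G\<^esub> k) \<or> (\<exists>k::int. x = y [^]\<^bsub>G\<^esub> k))"

definition power_independent :: "('a, 'b) monoid_scheme \<Rightarrow> 'a set \<Rightarrow> bool" where
  "power_independent G B \<longleftrightarrow> B \<subseteq> carrier G \<and> (\<forall>x\<in>B. \<forall>y\<in>B. \<not> power_adj G x y)"

definition cyclic_p_subgroup :: "('a, 'b) monoid_scheme \<Rightarrow> nat \<Rightarrow> 'a set \<Rightarrow> bool" where
  "cyclic_p_subgroup G p C \<longleftrightarrow> subgroup C G \<and> (\<exists>x\<in>C. C = generate G {x}) \<and>
     (\<exists>k::nat. card C = p ^ k)"

definition max_cyclic_p_subgroup :: "('a, 'b) monoid_scheme \<Rightarrow> nat \<Rightarrow> 'a set \<Rightarrow> bool" where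
  "max_cyclic_p_subgroup G p C \<longleftrightarrow> cyclic_p_subgroup G p C \<and>
     (\<forall>D. cyclic_p_subgroup G p D \<longrightarrow> card D \<le> card C)"

definition power_free_decomposition ::
  "('a, 'b) monoid_scheme \<Rightarrow> nat \<Rightarrow> 'a set \<Rightarrow> (nat \<Rightarrow> 'a set) \<Rightarrow> bool" where
  "power_free_decomposition G n C B \<longleftrightarrow>
     n \<ge> 1 \<and>
     (\<exists>p. prime p \<and> max_cyclic_p_subgroup G p C) \<and>
     carrier G = C \<union> (\<Union>i<n. B i) \<and>
     (\<forall>i<n. C \<inter> B i = {}) \<and>
     (\<forall>i<n. \<forall>j<n. i \<noteq> j \<longrightarrow> B i \<inter> B j = {}) \<and>
     (\<forall>i<n. B i \<noteq> {} \<and> power_independent G (B i) \<and> card (B i) > 1)"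

end

theory Submission
  imports Defs
begin

theorem proposition3p5:
  fixes G :: "('a, 'b) monoid_scheme" and n :: nat
  assumes "group G" and "finite (carrier G)" and "cyclic_group G" and "n \<ge> 1"
  shows "\<not> (\<exists>C B. power_free_decomposition G n C B)"
proof
  assume "\<exists>C B. power_free_decomposition G n C B"
  then obtain C B where D: "power_free_decomposition G n C B" by blast
  interpret group G by (rule assms(1))
  obtain x where x: "x \<in> carrier G" and cx: "carrier G = range (\<lambda>k::int. x [^]\<^bsub>G\<^esub> k)"
    using assms(3) cyclic_group by blast
  from D obtain p where "max_cyclic_p_subgroup G p C"
    unfolding power_free_decomposition_def by blast
  hence sub: "subgroup C G"
    unfolding max_cyclic_p_subgroup_def cyclic_p_subgroup_def by blast
  have carr: "carrier G = C \<union> (\<Union>i<n. B i)" and disj: "\<forall>i<n. C \<inter> B i = {}"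
    and Bi: "\<forall>i<n. B i \<noteq> {} \<and> power_independent G (B i) \<and> card (B i) > 1"
    using D unfolding power_free_decomposition_def by auto
  have xC: "x \<in> C"
  proof (rule ccontr)
    assume "x \<notin> C"
    then obtain i where i: "i < n" "x \<in> B i" using carr x by blast
    have ind: "power_independent G (B i)" and c: "card (B i) > 1" using Bi i by auto
    have "B i \<noteq> {x}" using c by auto
    then obtain y where y: "y \<in> B i" "y \<noteq> x" using i by blast
    have yG: "y \<in> carrier G" using ind y unfolding power_independent_def by blast
    then obtain k :: int where "y = x [^]\<^bsub>G\<^esub> k" using cx by blast
    hence "power_adj G x y" using x yG y unfolding power_adj_def by blast
    thus False using ind i y unfolding power_independent_def by blast
  qed
  have "carrier G \<subseteq> C"
  proof
    fix z assume "z \<in> carrier G"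
    then obtain k :: int where "z = x [^]\<^bsub>G\<^esub> k" using cx by blast
    thus "z \<in> C" using subgroup_int_pow_closed[OF sub xC] by simp
  qed
  moreover have "B 0 \<noteq> {}" "B 0 \<subseteq> carrier G" "C \<inter> B 0 = {}"
    using Bi disj assms(4) unfolding power_independent_def by auto
  ultimately show False by blast
qed

end
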